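(* Let $l^1 < l^2 < \dots < l^{S+1}$ be real numbers, let $g : [l^1, l^{S+1}] \to \mathbb{R}$ be continuous and also defined at $0$, and suppose that each interval $[l^s, l^{s+1}]$, $s \in \{1,\dots,S\}$, is either in $\check{S}$ ($g$ convex on $[l^s,l^{s+1}]$) or in $\hat{S}$ ($g$ concave on $[l^s,l^{s+1}]$). Let $\hat g : [l^1,l^{S+1}]\to\mathbb{R}$ be the piecewise-convex function equal to $g$ on intervals $[l^s,l^{s+1}]$ with $s\in\check S$, and equal to the secant $g(l^s) + \alpha^s (t - l^s)$ on intervals with $s \in \hat S$, where $\alpha^s = (g(l^{s+1}) - g(l^s))/(l^{s+1}-l^s)$. For $x \in [l^1, l^{S+1}]$ define $$\Phi(x) = \min \Big\{ \sum_{s\in\check S}\big( g(0) y^s + z^s\big) + \sum_{s \in \hat S}\big(\alpha^s x^s + (g(l^s) - \alpha^s l^s) y^s\big) \;:\; z^s \ge [g(x^s/y^s) - g(0)]\,y^s \ (s\in\check S),\ x = \sum_{s=1}^S x^s,\ l^s y^s \le x^s \le l^{s+1} y^s\ (s=1,\dots,S),\ \sum_{s=1}^S y^s = 1,\ y^s \ge 0 \Big\},$$ with the convention that when $y^s = 0$ (hence $x^s=0$) the perspective term $[g(x^s/y^s)-g(0)]y^s$ is $0$. Then $\Phi$ is the convex envelope of $\hat g$ on $[l^1,l^{S+1}]$; that is, the constraints of this continuous relaxation of the Multiple Choice Model describe the convex envelope of the (piecewise-convex) function.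
   Context: This is the continuous relaxation (binary variables $y^s$ relaxed to $y^s\ge 0$) of the Multiple Choice Model with perspective reformulation for a single univariate function $g$ in the Sequential Convex MINLP scheme: on intervals where $g$ is concave it is replaced by its secant (its convex envelope on that interval), and on intervals where $g$ is convex the perspective of $g(\cdot)-g(0)$ is used. The convex envelope of a function is the largest convex function lying below it. *)

theory Defs
  imports "HOL-Analysis.Analysis"
begin

definition is_convex_envelope :: "real set \<Rightarrow> (real \<Rightarrow> real) \<Rightarrow> (real \<Rightarrow> real) \<Rightarrow> bool" where
  "is_convex_envelope I h F \<longleftrightarrow>
     convex_on I F \<and> (\<forall>t\<in>I. F t \<le> h t) \<and>
     (\<forall>f. convex_on I f \<and> (\<forall>t\<in>I. f t \<le> h t) \<longrightarrow> (\<forall>t\<in>I. f t \<le> F t))"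

definition slope :: "(real \<Rightarrow> real) \<Rightarrow> (nat \<Rightarrow> real) \<Rightarrow> nat \<Rightarrow> real" where
  "slope g l s = (g (l (Suc s)) - g (l s)) / (l (Suc s) - l s)"

text \<open>At points lying in several concave intervals
  all secants coincide (they equal g at the breakpoints).\<close>
definition ghat :: "(real \<Rightarrow> real) \<Rightarrow> (nat \<Rightarrow> real) \<Rightarrow> nat \<Rightarrow> nat set \<Rightarrow> real \<Rightarrow> real" where
  "ghat g l S Cv t =
     (if \<exists>s\<in>{1..S} - Cv. t \<in> {l s..l (Suc s)}
      then (let s = (SOME s. s \<in> {1..S} - Cv \<and> t \<in> {l s..l (Suc s)})
            in g (l s) + slope g l s * (t - l s))
      else g t)"

definition persp :: "(real \<Rightarrow> real) \<Rightarrow> real \<Rightarrow> real \<Rightarrow> real" where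
  "persp g xv y = (if y = 0 then 0 else (g (xv / y) - g 0) * y)"

definition mcm_feasible ::
  "(real \<Rightarrow> real) \<Rightarrow> (nat \<Rightarrow> real) \<Rightarrow> nat \<Rightarrow> nat set \<Rightarrow> real
    \<Rightarrow> (nat \<Rightarrow> real) \<Rightarrow> (nat \<Rightarrow> real) \<Rightarrow> (nat \<Rightarrow> real) \<Rightarrow> bool" where
  "mcm_feasible g l S Cv x xs ys zs \<longleftrightarrow>
     (\<forall>s\<in>Cv. zs s \<ge> persp g (xs s) (ys s)) \<and>
     x = (\<Sum>s=1..S. xs s) \<and>
     (\<forall>s\<in>{1..S}. l s * ys s \<le> xs s \<and> xs s \<le> l (Suc s) * ys s) \<and>
     (\<Sum>s=1..S. ys s) = 1 \<and>
     (\<forall>s\<in>{1..S}. ys s \<ge> 0)"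

definition mcm_objective ::
  "(real \<Rightarrow> real) \<Rightarrow> (nat \<Rightarrow> real) \<Rightarrow> nat \<Rightarrow> nat set
    \<Rightarrow> (nat \<Rightarrow> real) \<Rightarrow> (nat \<Rightarrow> real) \<Rightarrow> (nat \<Rightarrow> real) \<Rightarrow> real" where
  "mcm_objective g l S Cv xs ys zs =
     (\<Sum>s\<in>Cv. g 0 * ys s + zs s) +
     (\<Sum>s\<in>{1..S} - Cv. slope g l s * xs s + (g (l s) - slope g l s * l s) * ys s)"

definition mcm_values :: "(real \<Rightarrow> real) \<Rightarrow> (nat \<Rightarrow> real) \<Rightarrow> nat \<Rightarrow> nat set \<Rightarrow> real \<Rightarrow> real set" where
  "mcm_values g l S Cv x =
     {mcm_objective g l S Cv xs ys zs | xs ys zs. mcm_feasible g l S Cv x xs ys zs}"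

definition Phi :: "(real \<Rightarrow> real) \<Rightarrow> (nat \<Rightarrow> real) \<Rightarrow> nat \<Rightarrow> nat set \<Rightarrow> real \<Rightarrow> real" where
  "Phi g l S Cv x = Inf (mcm_values g l S Cv x)"

end

theory Submission
  imports Defs
begin


definition phi :: "(real \<Rightarrow> real) \<Rightarrow> (nat \<Rightarrow> real) \<Rightarrow> nat set \<Rightarrow> nat \<Rightarrow> real \<Rightarrow> real" where
  "phi g l Cv s t = (if s \<in> Cv then g t else g (l s) + slope g l s * (t - l s))"

definition Kset :: "(nat \<Rightarrow> real) \<Rightarrow> nat \<Rightarrow> real \<Rightarrow> (nat \<Rightarrow> real \<times> real) set" where
 "Kset l S x = {q. (\<forall>s. q s \<in> (if s \<in> {1..S} then {l s..l (Suc s)} \<times> {0..1} else {(0,0)})) \<and>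
     (\<Sum>s=1..S. snd (q s)) = 1 \<and> (\<Sum>s=1..S. snd (q s) * fst (q s)) = x}"

definition val :: "(real \<Rightarrow> real) \<Rightarrow> (nat \<Rightarrow> real) \<Rightarrow> nat \<Rightarrow> nat set \<Rightarrow> (nat \<Rightarrow> real \<times> real) \<Rightarrow> real" where
 "val g l S Cv q = (\<Sum>s=1..S. snd (q s) * phi g l Cv s (fst (q s)))"

lemma coord_cont: "continuous_on UNIV (\<lambda>q::nat\<Rightarrow>real\<times>real. q s)"
  by simp

lemma K_compact: "compact (Kset l S x)"
proof -
  define B where "B = (\<lambda>s. if s \<in> {1..S} then {l s..l (Suc s)} \<times> {0..1::real} else {(0::real,0::real)})"
  have "compactin (product_topology (\<lambda>i. euclidean) UNIV) (PiE UNIV B)"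
    unfolding compactin_PiE by (auto simp: B_def compact_Times)
  then have c1: "compact (PiE UNIV B)" by (simp add: euclidean_product_topology)
  have c2: "closed {q::nat\<Rightarrow>real\<times>real. (\<Sum>s=1..S. snd (q s)) = 1}"
    by (intro closed_Collect_eq continuous_intros coord_cont)
  have c3: "closed {q::nat\<Rightarrow>real\<times>real. (\<Sum>s=1..S. snd (q s) * fst (q s)) = x}"
    by (intro closed_Collect_eq continuous_intros coord_cont)
  have "Kset l S x = PiE UNIV B \<inter> {q. (\<Sum>s=1..S. snd (q s)) = 1} \<inter> {q. (\<Sum>s=1..S. snd (q s) * fst (q s)) = x}"
    unfolding Kset_def B_def by (auto simp: PiE_UNIV_domain Pi_def)
  then show ?thesis using c1 c2 c3 by (simp add: compact_Int_closed closed_Int)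
qed

context
  fixes g :: "real \<Rightarrow> real" and l :: "nat \<Rightarrow> real" and S :: nat and Cv :: "nat set"
  assumes S: "S \<ge> 1"
    and l_mono: "\<forall>s\<in>{1..S}. l s < l (Suc s)"
    and g_cont: "continuous_on {l 1..l (Suc S)} g"
    and Cv_sub: "Cv \<subseteq> {1..S}"
    and g_convex: "\<forall>s\<in>Cv. convex_on {l s..l (Suc s)} g"
    and g_concave: "\<forall>s\<in>{1..S} - Cv. concave_on {l s..l (Suc s)} g"
begin

lemma l_le: assumes "1 \<le> i" "i \<le> j" "j \<le> Suc S" shows "l i \<le> l j"
  using assms(2,3)
proof (induction j rule: dec_induct)
  case base then show ?case by simp
next
  case (step n)
  then have "l n < l (Suc n)" using l_mono assms(1) by auto
  with step show ?case by simp
qed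

lemma I_sub: "s \<in> {1..S} \<Longrightarrow> {l s..l (Suc s)} \<subseteq> {l 1..l (Suc S)}"
  using l_le[of 1 s] l_le[of "Suc s" "Suc S"] by auto

lemma cover_aux: "1 \<le> n \<Longrightarrow> n \<le> S \<Longrightarrow> x \<in> {l 1..l (Suc n)} \<Longrightarrow> \<exists>s\<in>{1..n}. x \<in> {l s..l (Suc s)}"
proof (induction n)
  case 0 then show ?case by simp
next
  case (Suc n)
  show ?case
  proof (cases "n = 0")
    case True with Suc show ?thesis by auto
  next
    case False
    show ?thesis
    proof (cases "x \<le> l (Suc n)")
      case True
      with Suc False obtain s where "s \<in> {1..n}" "x \<in> {l s..l (Suc s)}" by auto
      then show ?thesis by auto
    next
      case False
      with Suc show ?thesis by (intro bexI[of _ "Suc n"]) auto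
    qed
  qed
qed

lemma cover: "x \<in> {l 1..l (Suc S)} \<Longrightarrow> \<exists>s\<in>{1..S}. x \<in> {l s..l (Suc s)}"
  using cover_aux[of S x] S by auto

lemma overlap: "s \<in> {1..S} \<Longrightarrow> s' \<in> {1..S} \<Longrightarrow> s < s' \<Longrightarrow> t \<in> {l s..l (Suc s)} \<Longrightarrow>
   t \<in> {l s'..l (Suc s')} \<Longrightarrow> t = l (Suc s) \<and> t = l s'"
  using l_le[of "Suc s" s'] by auto

lemma phi_left: "phi g l Cv s (l s) = g (l s)"
  by (simp add: phi_def)

lemma phi_right: "s \<in> {1..S} \<Longrightarrow> phi g l Cv s (l (Suc s)) = g (l (Suc s))"
  using l_mono by (auto simp: phi_def slope_def)

lemma phi_ghat: "s \<in> {1..S} \<Longrightarrow> t \<in> {l s..l (Suc s)} \<Longrightarrow> phi g l Cv s t = ghat g l S Cv t"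
proof -
  assume s: "s \<in> {1..S}" and t: "t \<in> {l s..l (Suc s)}"
  show ?thesis
  proof (cases "\<exists>s\<in>{1..S} - Cv. t \<in> {l s..l (Suc s)}")
    case True
    define s' where "s' = (SOME s. s \<in> {1..S} - Cv \<and> t \<in> {l s..l (Suc s)})"
    have s': "s' \<in> {1..S} - Cv" "t \<in> {l s'..l (Suc s')}"
      using someI_ex[OF True[unfolded Bex_def]] unfolding s'_def by auto
    have gh: "ghat g l S Cv t = phi g l Cv s' t"
      using True s' unfolding ghat_def s'_def[symmetric] by (simp add: phi_def Let_def)
    consider "s = s'" | "s < s'" | "s' < s" by linarith
    then show ?thesis
    proof cases
      case 1 then show ?thesis using gh by simp
    next
      case 2
      with overlap[OF s _ 2 t s'(2)] s' have "t = l (Suc s)" "t = l s'" by auto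
      then show ?thesis using gh phi_right[OF s] phi_left[of s'] by simp
    next
      case 3
      with overlap[OF _ s 3 s'(2) t] s' have "t = l (Suc s')" "t = l s" by auto
      then show ?thesis using gh phi_right[of s'] s' phi_left[of s] by simp
    qed
  next
    case False
    then have "s \<in> Cv" using s t by auto
    have "ghat g l S Cv t = g t" unfolding ghat_def using False by (simp only: if_False)
    then show ?thesis using \<open>s \<in> Cv\<close> by (simp add: phi_def)
  qed
qed

lemma phi_convex: "s \<in> {1..S} \<Longrightarrow> convex_on {l s..l (Suc s)} (phi g l Cv s)"
proof (cases "s \<in> Cv")
  case True
  then have "phi g l Cv s = g" by (auto simp: phi_def fun_eq_iff)
  then show ?thesis using g_convex True by simp
next
  case False
  show ?thesis
    unfolding convex_on_def
  proof (intro conjI ballI allI impI)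
    fix x y u v :: real assume "u + v = 1"
    then have "v = 1 - u" by simp
    then show "phi g l Cv s (u *\<^sub>R x + v *\<^sub>R y) \<le> u * phi g l Cv s x + v * phi g l Cv s y"
      using False unfolding \<open>v = 1 - u\<close> by (simp add: phi_def algebra_simps)
  qed simp
qed

lemma phi_cont: "s \<in> {1..S} \<Longrightarrow> continuous_on {l s..l (Suc s)} (phi g l Cv s)"
proof (cases "s \<in> Cv")
  case True
  assume s: "s \<in> {1..S}"
  then show ?thesis using True continuous_on_subset[OF g_cont I_sub[OF s]] by (simp add: phi_def)
next
  case False
  then show ?thesis by (simp add: phi_def continuous_intros)
qed

lemma val_cont: "continuous_on (Kset l S x) (val g l S Cv)"
  unfolding val_def
proof (intro continuous_on_sum)
  fix s assume s: "s \<in> {1..S}"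
  have "continuous_on (Kset l S x) (\<lambda>q. snd (q s))"
    by (intro continuous_intros continuous_on_subset[OF coord_cont]) simp
  moreover have "continuous_on (Kset l S x) (\<lambda>q. phi g l Cv s (fst (q s)))"
  proof (rule continuous_on_compose2[OF phi_cont[OF s]])
    show "continuous_on (Kset l S x) (\<lambda>q. fst (q s))"
      by (intro continuous_intros continuous_on_subset[OF coord_cont]) simp
    show "(\<lambda>q. fst (q s)) ` Kset l S x \<subseteq> {l s..l (Suc s)}"
    proof
      fix t assume "t \<in> (\<lambda>q. fst (q s)) ` Kset l S x"
      then obtain q where "q \<in> Kset l S x" "t = fst (q s)" by auto
      then show "t \<in> {l s..l (Suc s)}" using s unfolding Kset_def
        by (auto dest!: spec[of _ s] simp del: atLeastAtMost_iff)
    qed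
  qed
  ultimately show "continuous_on (Kset l S x) (\<lambda>q. snd (q s) * phi g l Cv s (fst (q s)))"
    by (rule continuous_on_mult)
qed

lemma val_split: "val g l S Cv q = (\<Sum>s\<in>Cv. snd (q s) * phi g l Cv s (fst (q s))) +
   (\<Sum>s\<in>{1..S} - Cv. snd (q s) * phi g l Cv s (fst (q s)))"
  unfolding val_def using sum.subset_diff[OF Cv_sub, of "\<lambda>s. snd (q s) * phi g l Cv s (fst (q s))"]
  by simp

lemma K_values: assumes q: "q \<in> Kset l S x" shows "val g l S Cv q \<in> mcm_values g l S Cv x"
proof -
  define xs where "xs = (\<lambda>s. snd (q s) * fst (q s))"
  define ys where "ys = (\<lambda>s. snd (q s))"
  define zs where "zs = (\<lambda>s. persp g (xs s) (ys s))"
  have qs: "s \<in> {1..S} \<Longrightarrow> fst (q s) \<in> {l s..l (Suc s)} \<and> snd (q s) \<in> {0..1}" for s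
    using q unfolding Kset_def by (auto dest!: spec[of _ s] simp del: atLeastAtMost_iff)
  have feas: "mcm_feasible g l S Cv x xs ys zs"
    unfolding mcm_feasible_def
  proof (intro conjI ballI)
    show "x = (\<Sum>s = 1..S. xs s)" using q unfolding Kset_def xs_def by simp
    show "(\<Sum>s = 1..S. ys s) = 1" using q unfolding Kset_def ys_def by simp
    fix s assume s: "s \<in> {1..S}"
    from qs[OF s] show "0 \<le> ys s" unfolding ys_def by simp
    from qs[OF s] show "l s * ys s \<le> xs s" unfolding ys_def xs_def
      by (simp add: mult_right_mono mult.commute[of "snd (q s)"])
    from qs[OF s] show "xs s \<le> l (Suc s) * ys s" unfolding ys_def xs_def
      by (simp add: mult_right_mono mult.commute[of "snd (q s)"])
  qed (simp add: zs_def)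
  have "mcm_objective g l S Cv xs ys zs = val g l S Cv q"
    unfolding val_split mcm_objective_def
  proof (intro arg_cong2[where f="(+)"] sum.cong refl)
    fix s assume s: "s \<in> Cv"
    show "g 0 * ys s + zs s = snd (q s) * phi g l Cv s (fst (q s))"
      using s by (simp add: zs_def persp_def xs_def ys_def phi_def algebra_simps)
  next
    fix s assume s: "s \<in> {1..S} - Cv"
    show "slope g l s * xs s + (g (l s) - slope g l s * l s) * ys s = snd (q s) * phi g l Cv s (fst (q s))"
      using s by (simp add: xs_def ys_def phi_def algebra_simps)
  qed
  with feas have "\<exists>xs ys zs. val g l S Cv q = mcm_objective g l S Cv xs ys zs \<and> mcm_feasible g l S Cv x xs ys zs"
    by metis
  then show ?thesis unfolding mcm_values_def by simp
qed

lemma values_K: assumes w: "w \<in> mcm_values g l S Cv x" shows "\<exists>q\<in>Kset l S x. val g l S Cv q \<le> w"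
proof -
  obtain xs ys zs where feas: "mcm_feasible g l S Cv x xs ys zs" and wv: "w = mcm_objective g l S Cv xs ys zs"
    using w unfolding mcm_values_def by blast
  note F = feas[unfolded mcm_feasible_def]
  define t where "t = (\<lambda>s. if ys s = 0 then l s else xs s / ys s)"
  define q where "q = (\<lambda>s. if s \<in> {1..S} then (t s, ys s) else (0,0))"
  have ys0: "s \<in> {1..S} \<Longrightarrow> ys s = 0 \<Longrightarrow> xs s = 0" for s
    using F by (metis mult_zero_right order_antisym)
  have ysx: "s \<in> {1..S} \<Longrightarrow> ys s * t s = xs s" for s
    using ys0[of s] by (auto simp: t_def)
  have ys1: "s \<in> {1..S} \<Longrightarrow> ys s \<le> 1" for s
    using F member_le_sum[of s "{1..S}" ys] by auto
  have ts: "s \<in> {1..S} \<Longrightarrow> t s \<in> {l s..l (Suc s)}" for s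
  proof -
    assume s: "s \<in> {1..S}"
    show ?thesis
    proof (cases "ys s = 0")
      case True then show ?thesis using l_mono s by (auto simp: t_def less_imp_le)
    next
      case False
      then have "ys s > 0" using F s by (simp add: order_le_neq_trans)
      then show ?thesis using F s False by (auto simp: t_def pos_le_divide_eq pos_divide_le_eq mult.commute)
    qed
  qed
  have qK: "q \<in> Kset l S x"
    unfolding Kset_def
  proof (intro CollectI conjI allI)
    fix s show "q s \<in> (if s \<in> {1..S} then {l s..l (Suc s)} \<times> {0..1} else {(0, 0)})"
      using ts[of s] ys1[of s] F by (auto simp: q_def)
  next
    show "(\<Sum>s = 1..S. snd (q s)) = 1" using F by (simp add: q_def)
  next
    have "(\<Sum>s = 1..S. snd (q s) * fst (q s)) = (\<Sum>s = 1..S. xs s)"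
      by (rule sum.cong) (auto simp: q_def ysx)
    then show "(\<Sum>s = 1..S. snd (q s) * fst (q s)) = x" using F by simp
  qed
  have "val g l S Cv q \<le> w"
    unfolding val_split wv mcm_objective_def
  proof (intro add_mono sum_mono)
    fix s assume s: "s \<in> Cv"
    then have s1: "s \<in> {1..S}" using Cv_sub by auto
    have z: "zs s \<ge> persp g (xs s) (ys s)" using F s by auto
    show "snd (q s) * phi g l Cv s (fst (q s)) \<le> g 0 * ys s + zs s"
    proof (cases "ys s = 0")
      case True then show ?thesis using z s s1 by (simp add: q_def persp_def)
    next
      case False then show ?thesis using z s s1 by (simp add: q_def persp_def phi_def t_def algebra_simps)
    qed
  next
    fix s assume s: "s \<in> {1..S} - Cv"
    show "snd (q s) * phi g l Cv s (fst (q s)) \<le> slope g l s * xs s + (g (l s) - slope g l s * l s) * ys s"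
    proof -
      have s1: "s \<in> {1..S}" using s by auto
      have "snd (q s) * phi g l Cv s (fst (q s)) = ys s * g (l s) + slope g l s * (ys s * t s) - slope g l s * l s * ys s"
        using s by (simp add: q_def phi_def algebra_simps)
      then have "snd (q s) * phi g l Cv s (fst (q s)) = ys s * g (l s) + slope g l s * xs s - slope g l s * l s * ys s"
        by (simp only: ysx[OF s1])
      then show ?thesis by (simp add: algebra_simps)
    qed
  qed
  with qK show ?thesis by blast
qed

lemma K_single: assumes s: "s \<in> {1..S}" and x: "x \<in> {l s..l (Suc s)}"
  shows "\<exists>q\<in>Kset l S x. val g l S Cv q = ghat g l S Cv x"
proof -
  define q where "q = (\<lambda>s'. if s' = s then (x, 1::real) else if s' \<in> {1..S} then (l s', 0) else (0,0))"
  have e1: "(\<Sum>s'=1..S. snd (q s')) = (\<Sum>s'=1..S. if s' = s then 1 else 0)"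
    by (rule sum.cong) (auto simp: q_def)
  have e2: "(\<Sum>s'=1..S. snd (q s') * fst (q s')) = (\<Sum>s'=1..S. if s' = s then x else 0)"
    by (rule sum.cong) (auto simp: q_def)
  have e3: "val g l S Cv q = (\<Sum>s'=1..S. if s' = s then phi g l Cv s x else 0)"
    unfolding val_def by (rule sum.cong) (auto simp: q_def)
  have "q \<in> Kset l S x"
    unfolding Kset_def
  proof (intro CollectI conjI allI)
    fix s' show "q s' \<in> (if s' \<in> {1..S} then {l s'..l (Suc s')} \<times> {0..1} else {(0, 0)})"
      using x s l_mono by (auto simp: q_def less_imp_le)
  qed (use e1 e2 s in auto)
  moreover have "val g l S Cv q = ghat g l S Cv x"
    using e3 s phi_ghat[OF s x] by simp
  ultimately show ?thesis by blast
qed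

lemma K_min: assumes x: "x \<in> {l 1..l (Suc S)}"
  shows "\<exists>q\<in>Kset l S x. \<forall>q'\<in>Kset l S x. val g l S Cv q \<le> val g l S Cv q'"
proof -
  obtain s where "s \<in> {1..S}" "x \<in> {l s..l (Suc s)}" using cover[OF x] by blast
  then have "Kset l S x \<noteq> {}" using K_single by blast
  then show ?thesis using continuous_attains_inf[OF K_compact _ val_cont] by blast
qed

lemma Phi_char: assumes q: "q \<in> Kset l S x" and qmin: "\<forall>q'\<in>Kset l S x. val g l S Cv q \<le> val g l S Cv q'"
  shows "Phi g l S Cv x = val g l S Cv q" "Phi g l S Cv x \<in> mcm_values g l S Cv x"
    "\<forall>w\<in>mcm_values g l S Cv x. Phi g l S Cv x \<le> w"
proof -
  have lb: "val g l S Cv q \<le> w" if "w \<in> mcm_values g l S Cv x" for w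
    using values_K[OF that] qmin by force
  show "Phi g l S Cv x = val g l S Cv q"
    unfolding Phi_def by (rule cInf_eq_minimum[OF K_values[OF q] lb])
  then show "Phi g l S Cv x \<in> mcm_values g l S Cv x" "\<forall>w\<in>mcm_values g l S Cv x. Phi g l S Cv x \<le> w"
    using K_values[OF q] lb by auto
qed

lemma Phi_le: assumes x: "x \<in> {l 1..l (Suc S)}" and q: "q \<in> Kset l S x"
  shows "Phi g l S Cv x \<le> val g l S Cv q"
proof -
  obtain q0 where "q0 \<in> Kset l S x" "\<forall>q'\<in>Kset l S x. val g l S Cv q0 \<le> val g l S Cv q'"
    using K_min[OF x] by blast
  then show ?thesis using Phi_char q by metis
qed

lemma Phi_attained: assumes x: "x \<in> {l 1..l (Suc S)}"
  shows "\<exists>q\<in>Kset l S x. Phi g l S Cv x = val g l S Cv q"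
  using K_min[OF x] Phi_char by metis

lemma Phi_below: assumes x: "x \<in> {l 1..l (Suc S)}" shows "Phi g l S Cv x \<le> ghat g l S Cv x"
proof -
  obtain s where "s \<in> {1..S}" "x \<in> {l s..l (Suc s)}" using cover[OF x] by blast
  then obtain q where "q \<in> Kset l S x" "val g l S Cv q = ghat g l S Cv x" using K_single by blast
  then show ?thesis using Phi_le[OF x] by metis
qed

lemma Phi_greatest: assumes f: "convex_on {l 1..l (Suc S)} f"
  and fle: "\<forall>t\<in>{l 1..l (Suc S)}. f t \<le> ghat g l S Cv t"
  and x: "x \<in> {l 1..l (Suc S)}"
  shows "f x \<le> Phi g l S Cv x"
proof -
  obtain q where q: "q \<in> Kset l S x" and P: "Phi g l S Cv x = val g l S Cv q"
    using Phi_attained[OF x] by blast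
  have qs: "s \<in> {1..S} \<Longrightarrow> fst (q s) \<in> {l s..l (Suc s)} \<and> snd (q s) \<in> {0..1}" for s
    using q unfolding Kset_def by (auto dest!: spec[of _ s] simp del: atLeastAtMost_iff)
  have xs: "x = (\<Sum>s=1..S. snd (q s) *\<^sub>R fst (q s))" using q unfolding Kset_def by simp
  have "f x \<le> (\<Sum>s=1..S. snd (q s) * f (fst (q s)))"
    unfolding xs
  proof (rule convex_on_sum[OF _ _ f])
    show "{1..S} \<noteq> {}" using S by auto
    show "(\<Sum>s=1..S. snd (q s)) = 1" using q unfolding Kset_def by simp
    show "\<And>i. i \<in> {1..S} \<Longrightarrow> 0 \<le> snd (q i)" using qs by auto
    show "\<And>i. i \<in> {1..S} \<Longrightarrow> fst (q i) \<in> {l 1..l (Suc S)}" using qs I_sub by blast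
  qed simp
  also have "\<dots> \<le> (\<Sum>s=1..S. snd (q s) * phi g l Cv s (fst (q s)))"
  proof (rule sum_mono)
    fix s assume s: "s \<in> {1..S}"
    have "f (fst (q s)) \<le> ghat g l S Cv (fst (q s))" using fle qs[OF s] I_sub[OF s] by blast
    also have "\<dots> = phi g l Cv s (fst (q s))" using phi_ghat[OF s] qs[OF s] by simp
    finally show "snd (q s) * f (fst (q s)) \<le> snd (q s) * phi g l Cv s (fst (q s))"
      using qs[OF s] by (simp add: mult_left_mono)
  qed
  also have "\<dots> = Phi g l S Cv x" using P by (simp add: val_def)
  finally show ?thesis .
qed

lemma comb_term:
  assumes s: "s \<in> {1..S}" and u: "0 \<le> u" "u \<le> 1"
    and t1: "t1 \<in> {l s..l (Suc s)}" and t2: "t2 \<in> {l s..l (Suc s)}"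
    and y1: "0 \<le> y1" and y2: "0 \<le> y2"
  defines "y \<equiv> (1 - u) * y1 + u * y2"
  defines "m \<equiv> (1 - u) * y1 * t1 + u * y2 * t2"
  defines "t \<equiv> (if y = 0 then l s else m / y)"
  shows "t \<in> {l s..l (Suc s)}" "y * t = m"
    "y * phi g l Cv s t \<le> (1 - u) * (y1 * phi g l Cv s t1) + u * (y2 * phi g l Cv s t2)"
proof -
  have a0: "0 \<le> (1 - u) * y1" and b0: "0 \<le> u * y2" using u y1 y2 by auto
  have lo: "l s * y \<le> m"
  proof -
    have "(1 - u) * y1 * l s \<le> (1 - u) * y1 * t1" using a0 t1 by (intro mult_left_mono) auto
    moreover have "u * y2 * l s \<le> u * y2 * t2" using b0 t2 by (intro mult_left_mono) auto
    ultimately show ?thesis unfolding y_def m_def by (simp add: algebra_simps)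
  qed
  have hi: "m \<le> l (Suc s) * y"
  proof -
    have "(1 - u) * y1 * t1 \<le> (1 - u) * y1 * l (Suc s)" using a0 t1 by (intro mult_left_mono) auto
    moreover have "u * y2 * t2 \<le> u * y2 * l (Suc s)" using b0 t2 by (intro mult_left_mono) auto
    ultimately show ?thesis unfolding y_def m_def by (simp add: algebra_simps)
  qed
  show "t \<in> {l s..l (Suc s)}"
  proof (cases "y = 0")
    case True then show ?thesis using l_mono s by (auto simp: t_def less_imp_le)
  next
    case False
    then have "y > 0" using a0 b0 unfolding y_def by linarith
    then show ?thesis using lo hi False by (auto simp: t_def pos_le_divide_eq pos_divide_le_eq mult.commute)
  qed
  show "y * t = m"
  proof (cases "y = 0")
    case True
    then have "(1 - u) * y1 = 0" "u * y2 = 0" using a0 b0 unfolding y_def by linarith+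
    then show ?thesis using True unfolding m_def by (metis add.right_neutral mult_zero_left)
  next
    case False then show ?thesis by (simp add: t_def)
  qed
  show "y * phi g l Cv s t \<le> (1 - u) * (y1 * phi g l Cv s t1) + u * (y2 * phi g l Cv s t2)"
  proof (cases "y = 0")
    case True
    then have "(1 - u) * y1 = 0" "u * y2 = 0" using a0 b0 unfolding y_def by linarith+
    then show ?thesis using True by (metis add.right_neutral mult_zero_left mult.assoc order_refl)
  next
    case False
    then have yp: "y > 0" using a0 b0 unfolding y_def by linarith
    define a where "a = (1 - u) * y1 / y"
    define b where "b = u * y2 / y"
    have ab: "a \<ge> 0" "b \<ge> 0" "a + b = 1" using a0 b0 yp unfolding a_def b_def y_def
      by (auto simp: add_divide_distrib[symmetric])
    have tt: "t = a *\<^sub>R t1 + b *\<^sub>R t2" using False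
      unfolding t_def a_def b_def m_def by (simp add: add_divide_distrib)
    have "phi g l Cv s t \<le> a * phi g l Cv s t1 + b * phi g l Cv s t2"
      using phi_convex[OF s] t1 t2 ab unfolding tt convex_on_def by blast
    then have "y * phi g l Cv s t \<le> y * (a * phi g l Cv s t1 + b * phi g l Cv s t2)"
      using yp by (simp add: mult_left_mono)
    also have "\<dots> = (1 - u) * (y1 * phi g l Cv s t1) + u * (y2 * phi g l Cv s t2)"
      using yp unfolding a_def b_def by (simp add: field_simps)
    finally show ?thesis .
  qed
qed

lemma Phi_convex: "convex_on {l 1..l (Suc S)} (Phi g l S Cv)"
proof (rule convex_onI)
  fix u x1 x2 :: real
  assume u: "0 < u" "u < 1" and x1: "x1 \<in> {l 1..l (Suc S)}" and x2: "x2 \<in> {l 1..l (Suc S)}"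
  obtain q1 where q1: "q1 \<in> Kset l S x1" and P1: "Phi g l S Cv x1 = val g l S Cv q1"
    using Phi_attained[OF x1] by blast
  obtain q2 where q2: "q2 \<in> Kset l S x2" and P2: "Phi g l S Cv x2 = val g l S Cv q2"
    using Phi_attained[OF x2] by blast
  have qs1: "s \<in> {1..S} \<Longrightarrow> fst (q1 s) \<in> {l s..l (Suc s)} \<and> snd (q1 s) \<in> {0..1}" for s
    using q1 unfolding Kset_def by (auto dest!: spec[of _ s] simp del: atLeastAtMost_iff)
  have qs2: "s \<in> {1..S} \<Longrightarrow> fst (q2 s) \<in> {l s..l (Suc s)} \<and> snd (q2 s) \<in> {0..1}" for s
    using q2 unfolding Kset_def by (auto dest!: spec[of _ s] simp del: atLeastAtMost_iff)
  define y where "y = (\<lambda>s. (1 - u) * snd (q1 s) + u * snd (q2 s))"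
  define m where "m = (\<lambda>s. (1 - u) * snd (q1 s) * fst (q1 s) + u * snd (q2 s) * fst (q2 s))"
  define t where "t = (\<lambda>s. if y s = 0 then l s else m s / y s)"
  define q where "q = (\<lambda>s. if s \<in> {1..S} then (t s, y s) else (0,0))"
  note C = comb_term[of _ u "fst (q1 _)" "fst (q2 _)" "snd (q1 _)" "snd (q2 _)"]
  have Cs: "t s \<in> {l s..l (Suc s)}" "y s * t s = m s"
    "y s * phi g l Cv s (t s) \<le> (1 - u) * (snd (q1 s) * phi g l Cv s (fst (q1 s))) + u * (snd (q2 s) * phi g l Cv s (fst (q2 s)))"
    if s: "s \<in> {1..S}" for s
    using C[OF s _ _ conjunct1[OF qs1[OF s]] conjunct1[OF qs2[OF s]]] qs1[OF s] qs2[OF s] u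
    unfolding t_def y_def m_def by auto
  let ?x = "(1 - u) *\<^sub>R x1 + u *\<^sub>R x2"
  have sy: "(\<Sum>s=1..S. y s) = 1"
    using q1 q2 unfolding Kset_def y_def by (simp add: sum.distrib sum_distrib_left[symmetric])
  have sm: "(\<Sum>s=1..S. m s) = ?x"
    using q1 q2 unfolding Kset_def m_def by (simp add: sum.distrib sum_distrib_left[symmetric] mult.assoc)
  have qK: "q \<in> Kset l S ?x"
    unfolding Kset_def
  proof (intro CollectI conjI allI)
    fix s show "q s \<in> (if s \<in> {1..S} then {l s..l (Suc s)} \<times> {0..1} else {(0, 0)})"
    proof (cases "s \<in> {1..S}")
      case True
      have "0 \<le> y s" "y s \<le> 1"
        using qs1[OF True] qs2[OF True] u unfolding y_def
        by (auto intro!: convex_bound_le add_nonneg_nonneg mult_nonneg_nonneg)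
      then show ?thesis using True Cs(1)[OF True] by (simp add: q_def)
    next
      case False then show ?thesis by (simp add: q_def del: atLeastAtMost_iff)
    qed
  next
    show "(\<Sum>s=1..S. snd (q s)) = 1" using sy by (simp add: q_def)
  next
    have "(\<Sum>s=1..S. snd (q s) * fst (q s)) = (\<Sum>s=1..S. m s)"
      by (rule sum.cong) (auto simp: q_def Cs(2))
    then show "(\<Sum>s=1..S. snd (q s) * fst (q s)) = ?x" using sm by simp
  qed
  have "Phi g l S Cv ?x \<le> val g l S Cv q"
    using Phi_le[OF _ qK] convexD[OF convex_real_interval(5) x1 x2, of "1-u" u] u by auto
  also have "\<dots> \<le> (1 - u) * val g l S Cv q1 + u * val g l S Cv q2"
    unfolding val_def sum_distrib_left sum.distrib[symmetric]
    by (rule sum_mono) (auto simp: q_def Cs(3))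
  finally show "Phi g l S Cv ?x \<le> (1 - u) * Phi g l S Cv x1 + u * Phi g l S Cv x2"
    using P1 P2 by simp
qed simp

end

theorem corollary1:
  fixes g :: "real \<Rightarrow> real" and l :: "nat \<Rightarrow> real" and S :: nat and Cv :: "nat set"
  assumes S: "S \<ge> 1"
    and l_mono: "\<forall>s\<in>{1..S}. l s < l (Suc s)"
    and g_cont: "continuous_on {l 1..l (Suc S)} g"
    and Cv_sub: "Cv \<subseteq> {1..S}"
    and g_convex: "\<forall>s\<in>Cv. convex_on {l s..l (Suc s)} g"
    and g_concave: "\<forall>s\<in>{1..S} - Cv. concave_on {l s..l (Suc s)} g"
  shows "(\<forall>x\<in>{l 1..l (Suc S)}.
            Phi g l S Cv x \<in> mcm_values g l S Cv x \<and>
            (\<forall>w\<in>mcm_values g l S Cv x. Phi g l S Cv x \<le> w)) \<and>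
         is_convex_envelope {l 1..l (Suc S)} (ghat g l S Cv) (Phi g l S Cv)"
proof (intro conjI)
  note A = S l_mono g_cont Cv_sub g_convex g_concave
  show "\<forall>x\<in>{l 1..l (Suc S)}. Phi g l S Cv x \<in> mcm_values g l S Cv x \<and>
            (\<forall>w\<in>mcm_values g l S Cv x. Phi g l S Cv x \<le> w)"
  proof
    fix x assume x: "x \<in> {l 1..l (Suc S)}"
    obtain q where q: "q \<in> Kset l S x" "\<forall>q'\<in>Kset l S x. val g l S Cv q \<le> val g l S Cv q'"
      using K_min[OF A x] by blast
    show "Phi g l S Cv x \<in> mcm_values g l S Cv x \<and> (\<forall>w\<in>mcm_values g l S Cv x. Phi g l S Cv x \<le> w)"
      using Phi_char(2,3)[OF A q] by blast
  qed
next
  note A = S l_mono g_cont Cv_sub g_convex g_concave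
  show "is_convex_envelope {l 1..l (Suc S)} (ghat g l S Cv) (Phi g l S Cv)"
    unfolding is_convex_envelope_def
    using Phi_convex[OF A] Phi_below[OF A] Phi_greatest[OF A] by blast
qed

end
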